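(* For $w\in(0,\infty)$ let $$Q_{0,w}(x)=s_*\frac{w}{3+w}\frac{1}{r^3}\Big(e_r\otimes e_r-\tfrac13I\Big)+s_*\Big(1-\frac{w}{1+w}\frac1r\Big)\Big(e_z\otimes e_z-\tfrac13I\Big),\quad r=|x|>1,$$ and let $U_w=\{x\in\Omega\setminus\mathbb Re_z: Q_{0,w}(x)\text{ is uniaxial}\}$, where $\Omega=\{|x|>1\}$. If $w>\sqrt3$, then $$U_w=\{(x_1,x_2,0):x_1^2+x_2^2=r_w^2\},$$ where $r_w$ is the unique solution $r>1$ of $r^3-\frac{w}{1+w}r^2-\frac{w}{3+w}=0$. The function $w\mapsto r_w$ is increasing on $(\sqrt3,\infty)$, with $r_w\to1$ as $w\downarrow\sqrt3$ and $r_w\to r_\infty$ as $w\to\infty$, where $r_\infty>1$ is the root of $r^3-r^2-1=0$ ($r_\infty\approx1.47$). If $w\le\sqrt3$, then $U_w=\emptyset$.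
   Context: $s_*>0$ is a fixed constant, $e_r=x/|x|$, $e_z=(0,0,1)$. A matrix $Q\in\mathcal S_0$ (real symmetric traceless $3\times 3$) is uniaxial if it has two equal eigenvalues. *)

theory Defs
  imports "HOL-Analysis.Analysis" "HOL-Computational_Algebra.Polynomial"
begin

definition ez :: "real^3" where "ez = axis 3 1"

definition outer :: "real^3 \<Rightarrow> real^3 \<Rightarrow> real^3^3" where
  "outer u v = (\<chi> i j. u$i * v$j)"

definition Id3 :: "real^3^3" where "Id3 = mat 1"

definition uniaxial :: "real^3^3 \<Rightarrow> bool" where
  "uniaxial Q \<longleftrightarrow> (\<exists>p lam. p \<noteq> 0 \<and> (\<forall>t. poly p t = det (t *\<^sub>R Id3 - Q)) \<and> order lam p \<ge> 2)"

definition Q0 :: "real \<Rightarrow> real \<Rightarrow> real^3 \<Rightarrow> real^3^3" where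
  "Q0 s w x = (let r = norm x; er = (1 / r) *\<^sub>R x in
     (s * (w / (3 + w)) * (1 / r^3)) *\<^sub>R (outer er er - (1/3) *\<^sub>R Id3)
     + (s * (1 - (w / (1 + w)) * (1 / r))) *\<^sub>R (outer ez ez - (1/3) *\<^sub>R Id3))"

definition Omega :: "(real^3) set" where "Omega = {x. norm x > 1}"

definition U :: "real \<Rightarrow> real \<Rightarrow> (real^3) set" where
  "U s w = {x \<in> Omega - range (\<lambda>t. t *\<^sub>R ez). uniaxial (Q0 s w x)}"

definition rw :: "real \<Rightarrow> real" where
  "rw w = (THE r. r > 1 \<and> r^3 - (w / (1 + w)) * r^2 - w / (3 + w) = 0)"

definition rinf :: real where
  "rinf = (THE r. r > 1 \<and> r^3 - r^2 - 1 = 0)"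

end

theory Submission
  imports Defs "HOL-Real_Asymp.Real_Asymp"
begin


lemma char_aux:
  fixes a b t x y z :: real
  assumes e: "x^2+y^2+z^2 = 1"
  shows "(t - (a * (x*x - 1 / 3) - b / 3)) *
     (t - (a * (y*y - 1 / 3) - b / 3)) *
     (t - (a * (z*z - 1 / 3) + b * 2 / 3)) -
     2 * (a * (a * (a * (x * (x * (y * (y * (z * z)))))))) -
     (t - (a * (x * x - 1 / 3) - b / 3)) * (a * (y * z)) *
     (a * (z * y)) -
     a * (x * y) * (a * (y * x)) *
     (t - (a * (z * z - 1 / 3) + b * 2 / 3)) -
     a * (x * z) * (t - (a * (y * y - 1 / 3) - b / 3)) *
     (a * (z * x)) =
     (t + (a + b) / 3) ^ 3 - (a + b) * (t + (a + b) / 3)^2 +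
     a * b * (x^2 + y^2) * (t + (a + b) / 3)"
proof -
  have "(t - (a * (x*x - 1 / 3) - b / 3)) *
     (t - (a * (y*y - 1 / 3) - b / 3)) *
     (t - (a * (z*z - 1 / 3) + b * 2 / 3)) -
     2 * (a * (a * (a * (x * (x * (y * (y * (z * z)))))))) -
     (t - (a * (x * x - 1 / 3) - b / 3)) * (a * (y * z)) *
     (a * (z * y)) -
     a * (x * y) * (a * (y * x)) *
     (t - (a * (z * z - 1 / 3) + b * 2 / 3)) -
     a * (x * z) * (t - (a * (y * y - 1 / 3) - b / 3)) *
     (a * (z * x)) =
     (t + (a + b) / 3) ^ 3 - (a*(x^2+y^2+z^2) + b) * (t + (a + b) / 3)^2 +
     a * b * (x^2 + y^2) * (t + (a + b) / 3)"
    by (simp add: power2_eq_square power3_eq_cube field_simps)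
  then show ?thesis using e by simp
qed

lemma det_char:
  fixes a b t :: real and e :: "real^3"
  assumes e: "e$1^2 + e$2^2 + e$3^2 = 1"
  shows "det (t *\<^sub>R Id3 - (a *\<^sub>R (outer e e - (1/3) *\<^sub>R Id3) + b *\<^sub>R (outer ez ez - (1/3) *\<^sub>R Id3)))
     = (t + (a+b)/3)^3 - (a+b)*(t + (a+b)/3)^2 + a*b*(e$1^2+e$2^2)*(t + (a+b)/3)"
  unfolding det_3 Id3_def outer_def ez_def
  apply (simp add: axis_def mat_def)
  using char_aux[OF e, of t a b] by simp

lemma uniax_char:
  fixes a b :: real and e :: "real^3"
  assumes e: "e$1^2 + e$2^2 + e$3^2 = 1" and a: "a > 0" and b: "b > 0"
    and nz: "e$1^2 + e$2^2 > 0"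
  shows "uniaxial (a *\<^sub>R (outer e e - (1/3) *\<^sub>R Id3) + b *\<^sub>R (outer ez ez - (1/3) *\<^sub>R Id3))
     \<longleftrightarrow> a = b \<and> e$3 = 0" (is "uniaxial ?Q \<longleftrightarrow> _")
proof -
  define k where "k = (a+b)/3"
  define d where "d = a*b*(e$1^2+e$2^2)"
  have dpos: "d > 0" unfolding d_def using a b nz by simp
  have D: "\<And>t. det (t *\<^sub>R Id3 - ?Q) = (t+k)^3 - (a+b)*(t+k)^2 + d*(t+k)"
    using det_char[OF e] unfolding k_def d_def by simp
  show ?thesis
  proof
    assume "uniaxial ?Q"
    then obtain p lam where p0: "p \<noteq> 0" and pp: "\<forall>t. poly p t = det (t *\<^sub>R Id3 - ?Q)"
      and ord: "order lam p \<ge> 2" unfolding uniaxial_def by blast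
    have "[:-lam,1:]^2 dvd p" using ord order_divides by blast
    then obtain q where pq: "p = [:-lam,1:]^2 * q" by (elim dvdE)
    have h0: "poly p lam = 0" unfolding pq by simp
    have h1: "poly (pderiv p) lam = 0" unfolding pq power2_eq_square pderiv_mult poly_add poly_mult by simp
    have pf: "poly p = (\<lambda>t. (t+k)^3 - (a+b)*(t+k)^2 + d*(t+k))" using pp D by auto
    have d1: "((\<lambda>t. (t+k)^3 - (a+b)*(t+k)^2 + d*(t+k)) has_real_derivative poly (pderiv p) lam) (at lam)"
      using poly_DERIV[of p lam] unfolding pf .
    have d2: "((\<lambda>t. (t+k)^3 - (a+b)*(t+k)^2 + d*(t+k)) has_real_derivative
         3*(lam+k)^2 - 2*(a+b)*(lam+k) + d) (at lam)"
      by (auto intro!: derivative_eq_intros simp: power2_eq_square algebra_simps)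
    have "3*(lam+k)^2 - 2*(a+b)*(lam+k) + d = 0" using DERIV_unique[OF d2 d1] h1 by simp
    moreover have "(lam+k)^3 - (a+b)*(lam+k)^2 + d*(lam+k) = 0" using h0 pf by simp
    ultimately show "a = b \<and> e$3 = 0"
    proof -
      define u where "u = lam + k"
      assume A: "3*(lam+k)^2 - 2*(a+b)*(lam+k) + d = 0" and B: "(lam+k)^3 - (a+b)*(lam+k)^2 + d*(lam+k) = 0"
      have A': "3*u^2 - 2*(a+b)*u + d = 0" and B': "u*(u^2 - (a+b)*u + d) = 0"
        using A B unfolding u_def by (simp_all add: power2_eq_square power3_eq_cube algebra_simps)
      have "u \<noteq> 0" using A' dpos by auto
      hence C: "u^2 - (a+b)*u + d = 0" using B' by simp
      have "u*(2*u - (a+b)) = 0" using A' C by (simp add: power2_eq_square algebra_simps)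
      hence U: "u = (a+b)/2" using \<open>u \<noteq> 0\<close> by simp
      have "d = (a+b)*u - u^2" using C by simp
      also have "\<dots> = (a+b)^2/4" unfolding U by (simp add: power2_eq_square field_simps)
      finally have d4: "4*d = (a+b)^2" by simp
      have s12: "e$1^2+e$2^2 = 1 - e$3^2" using e by simp
      have H: "4*(a*b*(1 - e$3^2)) = (a+b)^2" using d4 unfolding d_def s12 .
      have eq: "(a-b)^2 + 4*a*b*(e$3^2) = (a+b)^2 - 4*(a*b*(1-e$3^2))" by (simp add: power2_eq_square algebra_simps)
      have E: "(a-b)^2 + 4*a*b*(e$3^2) = 0" using eq unfolding H by simp
      have "(a-b)^2 \<ge> 0" by simp
      moreover have "4*a*b*(e$3^2) \<ge> 0" using a b by simp
      ultimately have "(a-b)^2 = 0" and "4*a*b*(e$3^2) = 0" using E by linarith+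
      thus "a = b \<and> e$3 = 0" using a b by simp
    qed
  next
    assume ab: "a = b \<and> e$3 = 0"
    hence d: "d = a^2" unfolding d_def using e by (simp add: power2_eq_square)
    define p where "p = [:-(a-k),1:]^2 * [:k,1:]"
    have p0: "p \<noteq> 0" unfolding p_def by (metis mult_eq_0_iff pCons_eq_0_iff one_neq_zero power_not_zero)
    have "\<forall>t. poly p t = det (t *\<^sub>R Id3 - ?Q)"
      using ab unfolding D p_def d by (simp add: power2_eq_square power3_eq_cube algebra_simps)
    moreover have "order (a-k) p \<ge> 2"
    proof -
      have "[:-(a-k),1:]^2 dvd p" unfolding p_def by (rule dvd_triv_left)
      thus ?thesis using p0 order_divides[of "a-k" 2 p] by blast
    qed
    ultimately show "uniaxial ?Q" unfolding uniaxial_def using p0 by blast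
  qed
qed



lemma norm3: "norm (x::real^3) ^ 2 = x$1^2 + x$2^2 + x$3^2"
  unfolding power2_norm_eq_inner inner_vec_def sum_3 by (simp add: power2_eq_square)

lemma axis_iff: "x \<in> range (\<lambda>t. t *\<^sub>R ez) \<longleftrightarrow> x$1 = 0 \<and> x$2 = 0"
proof
  assume "x \<in> range (\<lambda>t. t *\<^sub>R ez)"
  then obtain t where "x = t *\<^sub>R ez" by auto
  thus "x$1 = 0 \<and> x$2 = 0" by (simp add: ez_def axis_def)
next
  assume h: "x$1 = 0 \<and> x$2 = 0"
  have "x = (x$3) *\<^sub>R ez"
  proof (subst vec_eq_iff, intro allI)
    fix i show "x$i = ((x$3) *\<^sub>R ez)$i" using exhaust_3[of i] h by (auto simp: ez_def axis_def)
  qed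
  thus "x \<in> range (\<lambda>t. t *\<^sub>R ez)" by blast
qed

lemma aux_eq: "(r::real) \<noteq> 0 \<Longrightarrow> A / r^3 = 1 - B/r \<longleftrightarrow> A = r^3 - B*r^2"
  by (auto simp: field_simps power2_eq_square power3_eq_cube)

lemma U_char:
  fixes s w :: real and x :: "real^3"
  assumes s: "s > 0" and w: "w > 0"
  shows "x \<in> U s w \<longleftrightarrow> norm x > 1 \<and> x$3 = 0 \<and> x$1^2 + x$2^2 > 0
     \<and> norm x ^ 3 - (w/(1+w)) * norm x ^ 2 - w/(3+w) = 0"
proof (cases "norm x > 1 \<and> x$1^2 + x$2^2 > 0")
  case False
  have "x \<notin> U s w"
  proof
    assume "x \<in> U s w"
    hence "norm x > 1" "x \<notin> range (\<lambda>t. t *\<^sub>R ez)" unfolding U_def Omega_def by auto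
    hence "x$1^2 + x$2^2 > 0" using axis_iff[of x]
      by (metis add_pos_nonneg power2_less_0 not_less_iff_gr_or_eq zero_less_power2 add_nonneg_pos zero_le_power2)
    thus False using False \<open>norm x > 1\<close> by simp
  qed
  thus ?thesis using False by blast
next
  case True
  define r where "r = norm x"
  have r: "r > 1" using True r_def by simp
  have nz: "x$1^2 + x$2^2 > 0" using True by simp
  define e where "e = (1/r) *\<^sub>R x"
  have ec: "\<And>i. e$i = x$i / r" unfolding e_def by simp
  have S: "x$1^2 + x$2^2 + x$3^2 = r^2" using norm3[of x] unfolding r_def by simp
  have "r^2 \<noteq> 0" using r by simp
  have e1: "e$1^2 + e$2^2 + e$3^2 = 1"
    unfolding ec power_divide add_divide_distrib[symmetric] S using \<open>r^2 \<noteq> 0\<close> by simp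
  have enz: "e$1^2 + e$2^2 > 0" using nz r unfolding ec by (simp add: power_divide add_divide_distrib[symmetric])
  define a where "a = s * (w / (3 + w)) * (1 / r^3)"
  define b where "b = s * (1 - (w / (1 + w)) * (1 / r))"
  have a: "a > 0" unfolding a_def using s w r by simp
  have h1: "w/(1+w) < 1" "0 \<le> w/(1+w)" using w by simp_all
  have h2: "0 < 1/r" "1/r \<le> 1" using r by simp_all
  have "(w / (1 + w)) * (1 / r) < 1 * 1" using mult_less_le_imp_less[OF h1(1) h2(2) h1(2) h2(1)] .
  hence b: "b > 0" unfolding b_def using s by simp
  have Q: "Q0 s w x = a *\<^sub>R (outer e e - (1/3) *\<^sub>R Id3) + b *\<^sub>R (outer ez ez - (1/3) *\<^sub>R Id3)"
    unfolding Q0_def Let_def a_def b_def e_def r_def ..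
  have notax: "x \<notin> range (\<lambda>t. t *\<^sub>R ez)" using nz axis_iff[of x] by auto
  have "x \<in> U s w \<longleftrightarrow> uniaxial (Q0 s w x)" using True notax unfolding U_def Omega_def by auto
  also have "\<dots> \<longleftrightarrow> a = b \<and> e$3 = 0" unfolding Q by (rule uniax_char[OF e1 a b enz])
  also have "a = b \<longleftrightarrow> r ^ 3 - (w/(1+w)) * r ^ 2 - w/(3+w) = 0"
  proof -
    have nz1: "1+w \<noteq> 0" "3+w \<noteq> 0" "r \<noteq> 0" using w r by auto
    have ab: "a = s * (w/(3+w) / r^3)" "b = s * (1 - (w/(1+w)) / r)" unfolding a_def b_def by simp_all
    have "a = b \<longleftrightarrow> w/(3+w) / r^3 = 1 - (w/(1+w)) / r" unfolding ab using s by (simp only: mult_cancel_left) simp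
    also have "\<dots> \<longleftrightarrow> w/(3+w) = r^3 - (w/(1+w)) * r^2"
      by (rule aux_eq[OF nz1(3)])
    finally show ?thesis by linarith
  qed
  also have "e$3 = 0 \<longleftrightarrow> x$3 = 0" unfolding ec using r by simp
  finally show ?thesis using True r_def by auto
qed



lemma F_lip:
  fixes aa x y :: real
  assumes "aa \<le> 1" "1 \<le> x" "x \<le> y"
  shows "y - x \<le> (y^3 - aa*y^2) - (x^3 - aa*x^2)"
proof -
  define K where "K = y^2 + y*x + x^2 - aa*(y+x)"
  have id: "(y^3 - aa*y^2) - (x^3 - aa*x^2) = (y-x)*K"
    unfolding K_def by (simp add: power2_eq_square power3_eq_cube algebra_simps)
  have "aa*(y+x) \<le> 1*(y+x)" using assms by (intro mult_right_mono) auto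
  moreover have "y^2 \<ge> y" "x^2 \<ge> x" using assms
    by (auto simp: power2_eq_square)
  moreover have "1*1 \<le> y*x" using assms by (intro mult_mono) auto
  ultimately have "K \<ge> 1" unfolding K_def by (simp only: mult_1_left mult_1_right; linarith)
  hence "(y-x)*1 \<le> (y-x)*K" using assms by (intro mult_left_mono) auto
  thus ?thesis using id by simp
qed

lemma root_ex:
  fixes aa bb :: real
  assumes "aa \<le> 1" "bb \<le> 1" "1 - aa - bb < 0"
  shows "\<exists>!r. r > 1 \<and> r^3 - aa*r^2 - bb = 0"
proof -
  have "\<exists>x. 1 \<le> x \<and> x \<le> 2 \<and> (\<lambda>r. r^3 - aa*r^2 - bb) x = 0"
    using assms by (intro IVT') (auto intro!: continuous_intros)
  then obtain x where x: "1 \<le> x" "x \<le> 2" "x^3 - aa*x^2 - bb = 0" by auto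
  have "x \<noteq> 1" using x assms by auto
  hence x1: "x > 1" using x by simp
  show ?thesis
  proof (rule ex1I[of _ x])
    show "x > 1 \<and> x^3 - aa*x^2 - bb = 0" using x x1 by simp
  next
    fix y assume y: "y > 1 \<and> y^3 - aa*y^2 - bb = 0"
    show "y = x"
    proof (rule linorder_cases[of y x])
      assume "y < x" thus ?thesis using F_lip[of aa y x] assms x y by auto
    next
      assume "x < y" thus ?thesis using F_lip[of aa x y] assms x y by auto
    qed
  qed
qed

lemma sq3_gt: "w > sqrt 3 \<Longrightarrow> w^2 > (3::real)"
proof -
  assume "w > sqrt 3"
  hence "(sqrt 3)^2 < w^2" by (intro power_strict_mono) auto
  thus ?thesis by simp
qed

lemma sq3_le: "0 < w \<Longrightarrow> w \<le> sqrt 3 \<Longrightarrow> w^2 \<le> (3::real)"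
proof -
  assume "0 < w" "w \<le> sqrt 3"
  hence "w^2 \<le> (sqrt 3)^2" by (intro power_mono) auto
  thus ?thesis by simp
qed

lemma F1w: "(w::real) > 0 \<Longrightarrow> 1 - w/(1+w) - w/(3+w) = (3 - w^2)/((1+w)*(3+w))"
  by (simp add: field_simps power2_eq_square)

lemma alw: "(w::real) > 0 \<Longrightarrow> w/(1+w) \<le> 1 \<and> w/(3+w) \<le> 1 \<and> w/(1+w) < 1 \<and> w/(3+w) < 1 \<and> 0 < w/(1+w)"
  by auto

lemma rw_ex: "w > sqrt 3 \<Longrightarrow> \<exists>!r. r > 1 \<and> r^3 - (w / (1 + w)) * r^2 - w / (3 + w) = 0"
proof -
  assume w: "w > sqrt 3"
  hence w0: "w > 0" by (meson less_le_trans real_sqrt_ge_zero zero_le_numeral not_less)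
  have "(3 - w^2)/((1+w)*(3+w)) < 0" using sq3_gt[OF w] w0 by (intro divide_neg_pos) auto
  thus ?thesis using alw[OF w0] F1w[OF w0] by (intro root_ex) auto
qed

lemma rw_prop: "w > sqrt 3 \<Longrightarrow> rw w > 1 \<and> (rw w)^3 - (w / (1 + w)) * (rw w)^2 - w / (3 + w) = 0"
  unfolding rw_def by (rule theI'[OF rw_ex])

lemma rw_uniq: "w > sqrt 3 \<Longrightarrow> r > 1 \<Longrightarrow> r^3 - (w / (1 + w)) * r^2 - w / (3 + w) = 0 \<Longrightarrow> r = rw w"
  using rw_ex rw_prop by blast

lemma w_pos: "w > sqrt 3 \<Longrightarrow> (w::real) > 0"
  by (meson less_le_trans real_sqrt_ge_zero zero_le_numeral not_less)

lemma rw_bound1: "w > sqrt 3 \<Longrightarrow> rw w - 1 \<le> w/(1+w) + w/(3+w) - 1"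
proof -
  assume w: "w > sqrt 3"
  note p = rw_prop[OF w]
  have "rw w - 1 \<le> ((rw w)^3 - (w/(1+w))*(rw w)^2) - (1^3 - (w/(1+w))*1^2)"
    using p alw[OF w_pos[OF w]] by (intro F_lip) auto
  thus ?thesis using p by simp
qed

lemma rw_mono: "sqrt 3 < w1 \<Longrightarrow> w1 < w2 \<Longrightarrow> rw w1 < rw w2"
proof (rule ccontr)
  assume w1: "sqrt 3 < w1" and w12: "w1 < w2" and n: "\<not> rw w1 < rw w2"
  have w2: "sqrt 3 < w2" using w1 w12 by simp
  have p0: "w1 > 0" using w_pos[OF w1] .
  note p1 = rw_prop[OF w1] and p2 = rw_prop[OF w2]
  have a: "w1/(1+w1) < w2/(1+w2)" using p0 w12 by (simp add: field_simps)
  have b: "w1/(3+w1) < w2/(3+w2)" using p0 w12 by (simp add: field_simps)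
  have "(w1/(1+w1)) * (rw w1)^2 < (w2/(1+w2)) * (rw w1)^2" using a p1 by (intro mult_strict_right_mono) auto
  hence neg: "(rw w1)^3 - (w2/(1+w2))*(rw w1)^2 - w2/(3+w2) < 0" using p1 b by linarith
  have "rw w1 - rw w2 \<le> ((rw w1)^3 - (w2/(1+w2))*(rw w1)^2) - ((rw w2)^3 - (w2/(1+w2))*(rw w2)^2)"
    using n p2 alw[OF w_pos[OF w2]] by (intro F_lip) auto
  thus False using neg p2 n by linarith
qed

lemma rinf_ex: "\<exists>!r::real. r > 1 \<and> r^3 - r^2 - 1 = 0"
  using root_ex[of 1 1] by simp

lemma rinf_prop: "rinf > 1 \<and> rinf^3 - rinf^2 - 1 = 0"
  unfolding rinf_def by (rule theI'[OF rinf_ex])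

lemma rinf_bounds: "1.465 < rinf \<and> rinf < 1.475"
proof
  show "1.465 < rinf"
  proof (rule ccontr)
    assume "\<not> 1.465 < rinf"
    hence "1.465 - rinf \<le> ((1.465::real)^3 - 1*1.465^2) - (rinf^3 - 1*rinf^2)"
      using rinf_prop by (intro F_lip) auto
    moreover have "(1.465::real)^3 - 1*1.465^2 - 1 < 0" by (simp add: power3_eq_cube power2_eq_square)
    ultimately show False using rinf_prop \<open>\<not> 1.465 < rinf\<close> by linarith
  qed
  show "rinf < 1.475"
  proof (rule ccontr)
    assume "\<not> rinf < 1.475"
    hence "rinf - 1.475 \<le> (rinf^3 - 1*rinf^2) - ((1.475::real)^3 - 1*1.475^2)"
      by (intro F_lip) auto
    moreover have "(1.475::real)^3 - 1*1.475^2 - 1 > 0" by (simp add: power3_eq_cube power2_eq_square)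
    ultimately show False using rinf_prop \<open>\<not> rinf < 1.475\<close> by linarith
  qed
qed

lemma rw_inf_bound: "w > sqrt 3 \<Longrightarrow> rw w < rinf \<and> rinf - rw w \<le> 4/(1+w) + 3/(3+w)"
proof -
  assume w: "w > sqrt 3"
  have w0: "w > 0" using w_pos[OF w] .
  note p = rw_prop[OF w]
  define r where "r = rw w"
  have pr: "r > 1" "r^3 - (w/(1+w))*r^2 - w/(3+w) = 0" using p r_def by auto
  have e1: "1 - w/(1+w) = 1/(1+w)" "1 - w/(3+w) = 3/(3+w)" using w0 by (simp_all add: field_simps)
  have G: "r^3 - 1*r^2 = 1 - (1/(1+w)*r^2 + 3/(3+w))"
  proof -
    have "r^3 - 1*r^2 = (r^3 - (w/(1+w))*r^2 - w/(3+w)) - (1 - w/(1+w))*r^2 + w/(3+w)"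
      by (simp add: algebra_simps)
    also have "\<dots> = - (1/(1+w))*r^2 + w/(3+w)" using pr e1 by simp
    also have "w/(3+w) = 1 - 3/(3+w)" using e1 by simp
    finally show ?thesis by simp
  qed
  have pos: "1/(1+w)*r^2 + 3/(3+w) > 0" using w0 by (intro add_nonneg_pos) auto
  have lt: "r < rinf"
  proof (rule ccontr)
    assume "\<not> r < rinf"
    hence "r - rinf \<le> (r^3 - 1*r^2) - (rinf^3 - 1*rinf^2)" using rinf_prop by (intro F_lip) auto
    thus False using G rinf_prop pos \<open>\<not> r < rinf\<close> by simp
  qed
  have "rinf - r \<le> (rinf^3 - 1*rinf^2) - (r^3 - 1*r^2)" using lt pr by (intro F_lip) auto
  hence "rinf - r \<le> 1/(1+w)*r^2 + 3/(3+w)" using G rinf_prop by simp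
  moreover have "r^2 \<le> 4"
  proof -
    have "r < 2" using lt rinf_bounds by simp
    hence "r^2 \<le> 2^2" using pr by (intro power_mono) auto
    thus ?thesis by simp
  qed
  hence "1/(1+w)*r^2 \<le> 1/(1+w)*4" using w0 by (intro mult_left_mono) auto
  ultimately show ?thesis using lt r_def by simp
qed

lemma lim_top: "(rw \<longlongrightarrow> rinf) at_top"
proof (rule tendsto_sandwich[where f = "\<lambda>w. rinf - (4/(1+w) + 3/(3+w))" and h = "\<lambda>w. rinf"])
  have ev: "eventually (\<lambda>w. w > sqrt 3) at_top" by (rule eventually_gt_at_top)
  show "eventually (\<lambda>w. rinf - (4/(1+w) + 3/(3+w)) \<le> rw w) at_top"
    using ev by eventually_elim (drule rw_inf_bound, linarith)
  show "eventually (\<lambda>w. rw w \<le> rinf) at_top"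
    using ev by eventually_elim (use rw_inf_bound in force)
  have "((\<lambda>w::real. 4/(1+w) + 3/(3+w)) \<longlongrightarrow> 0) at_top" by real_asymp
  thus "((\<lambda>w. rinf - (4/(1+w) + 3/(3+w))) \<longlongrightarrow> rinf) at_top"
    using tendsto_diff[OF tendsto_const[of rinf]] by fastforce
qed simp

lemma lim_right: "(rw \<longlongrightarrow> 1) (at_right (sqrt 3))"
proof (rule tendsto_sandwich[where f = "\<lambda>w. 1" and h = "\<lambda>w. 1 + (w/(1+w) + w/(3+w) - 1)"])
  have ev: "eventually (\<lambda>w. w > sqrt 3) (at_right (sqrt 3))" by (rule eventually_at_right_less)
  show "eventually (\<lambda>w. 1 \<le> rw w) (at_right (sqrt 3))"
    using ev by eventually_elim (use rw_prop in force)
  show "eventually (\<lambda>w. rw w \<le> 1 + (w/(1+w) + w/(3+w) - 1)) (at_right (sqrt 3))"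
    using ev by eventually_elim (use rw_bound1 in force)
  have s: "sqrt 3 * sqrt 3 = (3::real)" by simp
  have "sqrt 3 > (0::real)" by simp
  hence nz: "(1+sqrt 3) \<noteq> 0" "3 + sqrt 3 \<noteq> (0::real)" "6 + sqrt 3 * 4 \<noteq> (0::real)" by linarith+
  have "sqrt 3/(1+sqrt 3) + sqrt 3/(3 + sqrt 3) - 1 = (0::real)"
    using nz by (simp add: field_simps s)
  moreover have "((\<lambda>w. 1 + (w/(1+w) + w/(3+w) - 1)) \<longlongrightarrow> 1 + (sqrt 3/(1+sqrt 3) + sqrt 3/(3 + sqrt 3) - 1)) (at_right (sqrt 3))"
    using nz by (intro tendsto_intros) auto
  ultimately show "((\<lambda>w. 1 + (w/(1+w) + w/(3+w) - 1)) \<longlongrightarrow> 1) (at_right (sqrt 3))" by simp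
qed simp


theorem proposition3p1:
  fixes s :: real
  assumes "s > 0"
  shows "(\<forall>w>sqrt 3. (\<exists>!r. r > 1 \<and> r^3 - (w / (1 + w)) * r^2 - w / (3 + w) = 0)
            \<and> U s w = {x. x$3 = 0 \<and> (x$1)^2 + (x$2)^2 = (rw w)^2})
   \<and> strict_mono_on {sqrt 3<..} rw
   \<and> (rw \<longlongrightarrow> 1) (at_right (sqrt 3))
   \<and> (\<exists>!r::real. r > 1 \<and> r^3 - r^2 - 1 = 0) \<and> rinf > 1 \<and> \<bar>rinf - 1.47\<bar> < 0.005
   \<and> (rw \<longlongrightarrow> rinf) at_top
   \<and> (\<forall>w. 0 < w \<and> w \<le> sqrt 3 \<longrightarrow> U s w = {})"
proof (intro conjI allI impI)
  fix w :: real assume w: "w > sqrt 3"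
  show "\<exists>!r. r > 1 \<and> r^3 - (w / (1 + w)) * r^2 - w / (3 + w) = 0" using rw_ex[OF w] .
  have w0: "w > 0" using w_pos[OF w] .
  note p = rw_prop[OF w]
  show "U s w = {x. x$3 = 0 \<and> (x$1)^2 + (x$2)^2 = (rw w)^2}"
  proof (rule set_eqI)
    fix x :: "real^3"
    show "x \<in> U s w \<longleftrightarrow> x \<in> {x. x$3 = 0 \<and> (x$1)^2 + (x$2)^2 = (rw w)^2}"
    proof
      assume "x \<in> U s w"
      hence h: "norm x > 1" "x$3 = 0" "norm x ^ 3 - (w/(1+w)) * norm x ^ 2 - w/(3+w) = 0"
        using U_char[OF assms w0] by auto
      have "norm x = rw w" using rw_uniq[OF w h(1) h(3)] .
      moreover have "x$3^2 = 0" using h(2) by simp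
      ultimately have "(x$1)^2 + (x$2)^2 = (rw w)^2" using norm3[of x] by simp
      thus "x \<in> {x. x$3 = 0 \<and> (x$1)^2 + (x$2)^2 = (rw w)^2}" using h(2) by simp
    next
      assume "x \<in> {x. x$3 = 0 \<and> (x$1)^2 + (x$2)^2 = (rw w)^2}"
      hence h: "x$3 = 0" "(x$1)^2 + (x$2)^2 = (rw w)^2" by auto
      have "x$3^2 = 0" using h(1) by simp
      hence "(norm x)^2 = (rw w)^2" using norm3[of x] h(2) by linarith
      moreover have "0 \<le> rw w" using p by linarith
      ultimately have n: "norm x = rw w" using power2_eq_imp_eq norm_ge_zero by blast
      have "(rw w)^2 > 0" using p by simp
      hence c: "norm x > 1 \<and> x$3 = 0 \<and> x$1^2 + x$2^2 > 0
         \<and> norm x ^ 3 - (w/(1+w)) * norm x ^ 2 - w/(3+w) = 0" using n p h by simp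
      thus "x \<in> U s w" using U_char[OF assms w0, of x] by blast
    qed
  qed
next
  show "strict_mono_on {sqrt 3<..} rw" by (rule strict_mono_onI) (auto intro: rw_mono)
next
  show "(rw \<longlongrightarrow> 1) (at_right (sqrt 3))" by (rule lim_right)
next
  show "\<exists>!r::real. r > 1 \<and> r^3 - r^2 - 1 = 0" by (rule rinf_ex)
next
  show "rinf > 1" using rinf_prop by simp
next
  have "rinf - 1.47 < 0.005 \<and> -(rinf - 1.47) < (0.005::real)" using rinf_bounds by auto
  thus "\<bar>rinf - 1.47\<bar> < 0.005" by (simp only: abs_less_iff)
next
  show "(rw \<longlongrightarrow> rinf) at_top" by (rule lim_top)
next
  fix w :: real assume w: "0 < w \<and> w \<le> sqrt 3"
  show "U s w = {}"
  proof (rule ccontr)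
    assume "U s w \<noteq> {}"
    then obtain x where "x \<in> U s w" by auto
    hence h: "norm x > 1" "norm x ^ 3 - (w/(1+w)) * norm x ^ 2 - w/(3+w) = 0"
      using U_char[OF assms, of w x] w by auto
    have "0 \<le> (3 - w^2)/((1+w)*(3+w))" using sq3_le[of w] w by simp
    hence f1: "0 \<le> 1 - w/(1+w) - w/(3+w)" using F1w[of w] w by simp
    have "norm x - 1 \<le> (norm x ^ 3 - (w/(1+w)) * norm x ^ 2) - (1^3 - (w/(1+w))*1^2)"
      using h w by (intro F_lip) auto
    thus False using h f1 by simp
  qed
qed

end
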